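(* Fix integers $k\geq 2$ and $n>r\geq 3$, and integers $s_0,\dots,s_{k-1}$ with $n\geq s_i\geq r+1$ for all $i$. If $n \nrightarrow (s_0,\dots,s_{k-1})^{r}$, then \[ 2^n \nrightarrow (s_0+1,\dots,s_{k-1}+1,\underbrace{r+2,\dots,r+2}_{\eta(r)\text{ terms}})^{r+1}, \] where $\eta(r)=1$ if $r=3$, $\eta(r)=2$ if $r>3$ is even, and $\eta(r)=3$ if $r>3$ is odd. That is, there is a colouring of the $(r+1)$-subsets of $\{0,\dots,2^n-1\}$ with $k+\eta(r)$ colours such that for each $i<k$ no set of size $s_i+1$ is monochromatic in colour $i$, and no set of size $r+2$ is monochromatic in any of the colours $k,\dots,k+\eta(r)-1$.
   Context: For $m\in\mathbb N$ write $[m]=\{0,\dots,m-1\}$ and $\binom{S}{r}$ for the set of $r$-element subsets of $S$. Given $k\geq 2$, $n>r\geq1$, an $r$-subset $k$-colouring of $[n]$ is a function $f:\binom{[n]}{r}\to[k]$; a set $X\subset[n]$ is monochromatic in colour $i$ if $f(T)=i$ for all $T\in\binom{X}{r}$. For integers $s_0,\dots,s_{k-1}$ with $n\geq s_i>r$, the relation $n\to(s_0,\dots,s_{k-1})^r$ means that for every $f:\binom{[n]}{r}\to[k]$ there is a colour $i$ and a subset of $[n]$ of size $s_i$ monochromatic in colour $i$; $n\nrightarrow(\dots)^r$ is its negation. $(s)_k^r$ abbreviates $(s,\dots,s)^r$ with $k$ entries. *)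

theory Defs
  imports Main
begin

definition monochromatic :: "(nat set \<Rightarrow> nat) \<Rightarrow> nat \<Rightarrow> nat set \<Rightarrow> nat \<Rightarrow> bool" where
  "monochromatic f r X i \<longleftrightarrow> (\<forall>T. T \<subseteq> X \<and> card T = r \<longrightarrow> f T = i)"

definition arrows :: "nat \<Rightarrow> (nat \<Rightarrow> nat) \<Rightarrow> nat \<Rightarrow> nat \<Rightarrow> bool" where
  "arrows n s k r \<longleftrightarrow>
     (\<forall>f. (\<forall>T. T \<subseteq> {..<n} \<and> card T = r \<longrightarrow> f T < k) \<longrightarrow>
        (\<exists>i<k. \<exists>X. X \<subseteq> {..<n} \<and> card X = s i \<and> monochromatic f r X i))"

definition eta :: "nat \<Rightarrow> nat" where
  "eta r = (if r = 3 then 1 else if even r then 2 else 3)"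

end

theory Submission
  imports Defs
begin

definition dlt :: "nat \<Rightarrow> nat \<Rightarrow> nat" where
  "dlt a b = (LEAST j. a div 2^(Suc j) = b div 2^(Suc j))"

lemma div2s: "x div 2^j div 2 = x div (2::nat)^(Suc j)"
  by (simp only: power_Suc2 div_mult2_eq)

lemma div_up: "a div 2^j = b div 2^j \<Longrightarrow> j \<le> i \<Longrightarrow> a div 2^i = b div (2::nat)^i"
proof (induction i)
  case 0 then show ?case by simp
next
  case (Suc i)
  show ?case
  proof (cases "j = Suc i")
    case True then show ?thesis using Suc by simp
  next
    case False
    then have "a div 2^i = b div 2^i" using Suc by simp
    then have "a div 2^i div 2 = b div 2^i div 2" by simp
    then show ?thesis by (simp only: div2s)
  qed
qed

lemma dlt_ex: "\<exists>j. a div 2^(Suc j) = b div (2::nat)^(Suc j)"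
proof -
  have "a < 2^a" "b < 2^b" by (rule less_exp)+
  moreover have "(2::nat)^a \<le> 2^(Suc (a+b))" "(2::nat)^b \<le> 2^(Suc (a+b))"
    by (rule power_increasing; simp)+
  ultimately have "a < 2^(Suc (a+b))" "b < 2^(Suc (a+b))" by linarith+
  then have "a div 2^(Suc (a+b)) = 0" "b div 2^(Suc (a+b)) = 0" by (simp_all add: div_less)
  then show ?thesis by metis
qed

lemma dlt_iff: "a div 2^(Suc j) = b div 2^(Suc j) \<longleftrightarrow> dlt a b \<le> j"
proof
  assume "a div 2^(Suc j) = b div 2^(Suc j)"
  then show "dlt a b \<le> j" unfolding dlt_def by (rule Least_le)
next
  assume h: "dlt a b \<le> j"
  have "a div 2^(Suc (dlt a b)) = b div 2^(Suc (dlt a b))"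
    unfolding dlt_def using dlt_ex by (rule LeastI_ex)
  then show "a div 2^(Suc j) = b div 2^(Suc j)" using div_up[of a "Suc (dlt a b)" b "Suc j"] h by simp
qed

lemma dlt_max: assumes "a \<le> b" "b \<le> c" shows "dlt a c = max (dlt a b) (dlt b c)"
proof -
  have key: "dlt a c \<le> j \<longleftrightarrow> dlt a b \<le> j \<and> dlt b c \<le> j" for j
  proof -
    have m1: "a div 2^(Suc j) \<le> b div 2^(Suc j)" using assms(1) by (rule div_le_mono)
    have m2: "b div 2^(Suc j) \<le> c div 2^(Suc j)" using assms(2) by (rule div_le_mono)
    have "a div 2^(Suc j) = c div 2^(Suc j) \<longleftrightarrow> a div 2^(Suc j) = b div 2^(Suc j) \<and> b div 2^(Suc j) = c div 2^(Suc j)"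
      using m1 m2 by linarith
    then show ?thesis by (simp only: dlt_iff)
  qed
  have "dlt a c \<le> max (dlt a b) (dlt b c)" using key by simp
  moreover have "dlt a b \<le> dlt a c" "dlt b c \<le> dlt a c" using key[of "dlt a c"] by simp_all
  ultimately show ?thesis by simp
qed

lemma dlt_ne_div: assumes "a < b" shows "a div 2^(dlt a b) \<noteq> b div 2^(dlt a b)"
proof
  assume h: "a div 2^(dlt a b) = b div 2^(dlt a b)"
  show False
  proof (cases "dlt a b")
    case 0 then show ?thesis using h assms by simp
  next
    case (Suc j)
    then have "dlt a b \<le> j" using h dlt_iff[of a j b] by simp
    then show ?thesis using Suc by simp
  qed
qed

lemma dlt_neq: assumes "a < b" "b < c" shows "dlt a b \<noteq> dlt b c"
proof
  assume e: "dlt a b = dlt b c"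
  define j where "j = dlt a b"
  have q1: "a div 2^(Suc j) = b div 2^(Suc j)" using dlt_iff[of a j b] j_def by simp
  have q2: "b div 2^(Suc j) = c div 2^(Suc j)" using dlt_iff[of b j c] j_def e by simp
  define x where "x = a div 2^j"
  define y where "y = b div 2^j"
  define z where "z = c div 2^j"
  have "x \<noteq> y" using dlt_ne_div[OF assms(1)] x_def y_def j_def by simp
  moreover have "y \<noteq> z" using dlt_ne_div[OF assms(2)] y_def z_def j_def e by simp
  moreover have "x \<le> y" "y \<le> z" using assms div_le_mono x_def y_def z_def by auto
  moreover have "x div 2 = y div 2" "y div 2 = z div 2"
    using q1 q2 x_def y_def z_def by (simp_all only: div2s)
  ultimately have "x + 2 \<le> z" by linarith
  then have "(x + 2) div 2 \<le> z div 2" by (rule div_le_mono)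
  then show False using \<open>x div 2 = y div 2\<close> \<open>y div 2 = z div 2\<close> by simp
qed

lemma dlt_bound: assumes "a < 2^n" "b < 2^n" "n > 0" shows "dlt a b < n"
proof -
  have "Suc (n-1) = n" using assms by simp
  then have "a div 2^(Suc (n-1)) = b div 2^(Suc (n-1))" using assms by (simp add: div_less)
  then have "dlt a b \<le> n - 1" using dlt_iff by blast
  then show ?thesis using assms by simp
qed

definition en :: "nat set \<Rightarrow> nat \<Rightarrow> nat" where "en T i = sorted_list_of_set T ! i"
definition dl :: "nat set \<Rightarrow> nat \<Rightarrow> nat" where "dl T i = dlt (en T i) (en T (Suc i))"

lemma en_mono: "finite T \<Longrightarrow> i < j \<Longrightarrow> j < card T \<Longrightarrow> en T i < en T j"
  unfolding en_def
  using sorted_wrt_nth_less[OF strict_sorted_list_of_set, of i j T] length_sorted_list_of_set[of T] by simp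

lemma en_in: "finite T \<Longrightarrow> i < card T \<Longrightarrow> en T i \<in> T"
  unfolding en_def
  using nth_mem[of i "sorted_list_of_set T"] length_sorted_list_of_set[of T] set_sorted_list_of_set[of T] by simp

lemma en_surj: "finite T \<Longrightarrow> x \<in> T \<Longrightarrow> \<exists>i<card T. en T i = x"
  unfolding en_def
  using in_set_conv_nth[of x "sorted_list_of_set T"] length_sorted_list_of_set[of T] set_sorted_list_of_set[of T] by auto

lemma en_image:
  assumes h: "\<And>i j. i < j \<Longrightarrow> j \<le> M \<Longrightarrow> g i < g j"
  shows "card (g ` {..M}) = Suc M" and "i \<le> M \<Longrightarrow> en (g ` {..M}) i = g i"
proof -
  have inj: "inj_on g {..M}"
    by (rule inj_onI) (metis atMost_iff h less_irrefl nat_neq_iff)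
  then show c: "card (g ` {..M}) = Suc M" by (simp add: card_image)
  have s: "sorted_wrt (<) (map g [0..<Suc M])"
    unfolding sorted_wrt_iff_nth_less by (auto simp del: upt_Suc intro!: h)
  have st: "set (map g [0..<Suc M]) = g ` {..M}" by (simp del: upt_Suc add: atLeast0_atMost_Suc atLeastLessThanSuc_atLeastAtMost atMost_atLeast0)
  have "sorted_list_of_set (g ` {..M}) = map g [0..<Suc M]"
    using sorted_list_of_set_unique[of "g ` {..M}" "map g [0..<Suc M]"] s st c by simp
  then show "i \<le> M \<Longrightarrow> en (g ` {..M}) i = g i"
    unfolding en_def by (simp del: upt_Suc add: nth_map)
qed

lemma en_image_dl:
  assumes h: "\<And>i j. i < j \<Longrightarrow> j \<le> M \<Longrightarrow> g i < g j" and "i < M"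
  shows "dl (g ` {..M}) i = dlt (g i) (g (Suc i))"
  using en_image(2)[OF h] assms unfolding dl_def by simp

lemma dlt_interval:
  assumes mono: "\<And>i j. i \<le> j \<Longrightarrow> j \<le> M \<Longrightarrow> b i \<le> (b j::nat)" and "x < y" "y \<le> M"
  shows "dlt (b x) (b y) \<in> (\<lambda>l. dlt (b l) (b (Suc l))) ` {x..<y}
       \<and> (\<forall>l\<in>{x..<y}. dlt (b l) (b (Suc l)) \<le> dlt (b x) (b y))"
  using assms(2,3)
proof (induction y)
  case 0 then show ?case by simp
next
  case (Suc y)
  show ?case
  proof (cases "x = y")
    case True then show ?thesis by auto
  next
    case False
    then have xy: "x < y" using Suc by simp
    have IH: "dlt (b x) (b y) \<in> (\<lambda>l. dlt (b l) (b (Suc l))) ` {x..<y}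
       \<and> (\<forall>l\<in>{x..<y}. dlt (b l) (b (Suc l)) \<le> dlt (b x) (b y))" using Suc xy by simp
    have m: "dlt (b x) (b (Suc y)) = max (dlt (b x) (b y)) (dlt (b y) (b (Suc y)))"
      by (rule dlt_max) (use mono[of x y] mono[of y "Suc y"] xy Suc.prems in simp_all)
    have sp: "{x..<Suc y} = insert y {x..<y}" using xy by auto
    show ?thesis unfolding m sp using IH by (auto simp: max_def)
  qed
qed

lemma dlt_interval_eq:
  assumes mono: "\<And>i j. i \<le> j \<Longrightarrow> j \<le> M \<Longrightarrow> b i \<le> (b j::nat)" and "x < y" "y \<le> M"
    and "q \<in> {x..<y}" and "\<And>l. l \<in> {x..<y} \<Longrightarrow> dlt (b l) (b (Suc l)) \<le> dlt (b q) (b (Suc q))"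
  shows "dlt (b x) (b y) = dlt (b q) (b (Suc q))"
proof -
  note I = dlt_interval[of M b, OF mono assms(2) assms(3)]
  then obtain q' where q': "q' \<in> {x..<y}" "dlt (b x) (b y) = dlt (b q') (b (Suc q'))" by blast
  have "dlt (b q) (b (Suc q)) \<le> dlt (b x) (b y)" using I assms(4) by blast
  moreover have "dlt (b x) (b y) \<le> dlt (b q) (b (Suc q))" using q' assms(5) by simp
  ultimately show ?thesis by simp
qed

definition peak :: "(nat \<Rightarrow> nat) \<Rightarrow> nat \<Rightarrow> nat \<Rightarrow> bool" where
  "peak g L j \<longleftrightarrow> 1 \<le> j \<and> j + 1 < L \<and> g (j - 1) < g j \<and> g (Suc j) < g j"
definition hasp :: "(nat \<Rightarrow> nat) \<Rightarrow> nat \<Rightarrow> bool" where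
  "hasp g L \<longleftrightarrow> (\<exists>j. peak g L j)"
definition isX :: "(nat \<Rightarrow> nat) \<Rightarrow> nat \<Rightarrow> bool" where
  "isX g L \<longleftrightarrow> peak g L 1 \<and> (\<exists>q. q \<noteq> 1 \<and> peak g L q)"
definition ext :: "(nat \<Rightarrow> nat) \<Rightarrow> nat \<Rightarrow> bool" where
  "ext g L \<longleftrightarrow> hasp g L \<and> \<not> isX g L"
definition fp :: "(nat \<Rightarrow> nat) \<Rightarrow> nat \<Rightarrow> nat" where
  "fp g L = (LEAST j. peak g L j)"
definition clr :: "(nat \<Rightarrow> nat) \<Rightarrow> nat \<Rightarrow> nat" where
  "clr g L = (fp g L + 1) mod 2"

definition shl :: "(nat \<Rightarrow> nat) \<Rightarrow> nat \<Rightarrow> nat" where "shl e i = e (Suc i)"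

lemma peak_L: "peak (shl e) r j \<longleftrightarrow> 1 \<le> j \<and> peak e (Suc r) (Suc j)"
  unfolding peak_def shl_def by auto

lemma peak_R: "peak e r j \<Longrightarrow> peak e (Suc r) j"
  unfolding peak_def by auto

lemma peak_R_iff: "peak e r j \<longleftrightarrow> peak e (Suc r) j \<and> j + 1 < r"
  unfolding peak_def by auto

lemma fp_eq: "peak g L v \<Longrightarrow> (\<And>j. j < v \<Longrightarrow> \<not> peak g L j) \<Longrightarrow> fp g L = v"
  unfolding fp_def by (rule Least_equality) (auto simp: not_less[symmetric])

lemma fp_peak: "hasp g L \<Longrightarrow> peak g L (fp g L)"
  unfolding fp_def hasp_def by (rule LeastI_ex)

lemma fp_min: "j < fp g L \<Longrightarrow> \<not> peak g L j"
  unfolding fp_def by (rule not_less_Least)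

lemma peak_ge1: "peak g L j \<Longrightarrow> 1 \<le> j" unfolding peak_def by simp

lemma peak_adj: "peak g L j \<Longrightarrow> \<not> peak g L (Suc j)"
  unfolding peak_def by auto

lemma ext_intro1: "peak g L j \<Longrightarrow> \<not> peak g L 1 \<Longrightarrow> ext g L"
  unfolding ext_def hasp_def isX_def by blast

lemma ext_intro2: "peak g L 1 \<Longrightarrow> \<not> (\<exists>q. q \<noteq> 1 \<and> peak g L q) \<Longrightarrow> ext g L"
  unfolding ext_def hasp_def isX_def by blast

lemma comb_I:
  assumes r: "r \<ge> 3" and hp: "hasp e (Suc r)"
  shows "ext (shl e) r \<or> ext e r"
proof (cases "peak e (Suc r) 1")
  case True
  show ?thesis
  proof (cases "\<exists>q. q \<noteq> 1 \<and> peak e (Suc r) q")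
    case True
    then obtain q where q: "q \<noteq> 1" "peak e (Suc r) q" by blast
    have "q \<noteq> 2" using peak_adj[OF \<open>peak e (Suc r) 1\<close>] q by (auto simp: numeral_2_eq_2)
    then have q3: "q \<ge> 3" using q peak_ge1[OF q(2)] by linarith
    have "peak (shl e) r (q - 1)" unfolding peak_L using q3 q by simp
    moreover have "\<not> peak (shl e) r 1"
      unfolding peak_L using peak_adj[OF \<open>peak e (Suc r) 1\<close>] by (simp add: numeral_2_eq_2)
    ultimately have "ext (shl e) r" by (rule ext_intro1)
    then show ?thesis by (rule disjI1)
  next
    case False
    have "peak e r 1" using \<open>peak e (Suc r) 1\<close> r unfolding peak_def by simp
    moreover have "\<not> (\<exists>q. q \<noteq> 1 \<and> peak e r q)" using False peak_R by blast
    ultimately have "ext e r" by (rule ext_intro2)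
    then show ?thesis by (rule disjI2)
  qed
next
  case F1: False
  obtain p where p: "peak e (Suc r) p" using hp unfolding hasp_def by blast
  show ?thesis
  proof (cases "peak e (Suc r) 2")
    case False
    have "p \<noteq> 1" using p F1 by auto
    moreover have "p \<noteq> 2" using p False by auto
    ultimately have p3: "p \<ge> 3" using peak_ge1[OF p] by linarith
    have "peak (shl e) r (p - 1)" unfolding peak_L using p3 p by simp
    moreover have "\<not> peak (shl e) r 1" unfolding peak_L using False by (simp add: numeral_2_eq_2)
    ultimately have "ext (shl e) r" by (rule ext_intro1)
    then show ?thesis by (rule disjI1)
  next
    case True
    show ?thesis
    proof (cases "r \<ge> 4")
      case True
      then have "peak e r 2" using \<open>peak e (Suc r) 2\<close> unfolding peak_def by simp
      moreover have "\<not> peak e r 1" using F1 peak_R by blast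
      ultimately have "ext e r" by (rule ext_intro1)
    then show ?thesis by (rule disjI2)
    next
      case False
      then have r3: "r = 3" using r by simp
      have "peak (shl e) r 1" unfolding peak_L using True by (simp add: numeral_2_eq_2)
      moreover have "\<not> (\<exists>q. q \<noteq> 1 \<and> peak (shl e) r q)"
        using r3 unfolding peak_def by auto
      ultimately have "ext (shl e) r" by (rule ext_intro2)
    then show ?thesis by (rule disjI1)
    qed
  qed
qed


definition del2 :: "(nat \<Rightarrow> nat) \<Rightarrow> nat \<Rightarrow> nat" where
  "del2 e i = (if i = 0 then e 0 else if i = 1 then max (e 1) (e 2) else e (Suc i))"
definition delr :: "(nat \<Rightarrow> nat) \<Rightarrow> nat \<Rightarrow> nat \<Rightarrow> nat" where
  "delr e r i = (if i < r - 2 then e i else if i = r - 2 then max (e (r - 2)) (e (r - 1)) else e r)"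

lemma isX_intro: "peak g L 1 \<Longrightarrow> peak g L q \<Longrightarrow> q \<noteq> 1 \<Longrightarrow> isX g L"
  unfolding isX_def by blast

lemma comb_II:
  assumes r: "r \<ge> 3" and cd: "\<And>i. i < r \<Longrightarrow> e i \<noteq> e (Suc i)"
    and hL: "ext (shl e) r" and hR: "ext e r" and h2: "ext (del2 e) r" and h3: "ext (delr e r) r"
    and cL: "clr (shl e) r = clr e r" and c2: "clr (del2 e) r = clr e r" and c3: "clr (delr e r) r = clr e r"
  shows False
proof -
  obtain j0 where j0: "peak e r j0" using hR unfolding ext_def hasp_def by blast
  have hp: "hasp e (Suc r)" using peak_R[OF j0] unfolding hasp_def by blast
  define p where "p = fp e (Suc r)"
  have pk: "peak e (Suc r) p" using fp_peak[OF hp] p_def by simp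
  have mn: "\<And>j. j < p \<Longrightarrow> \<not> peak e (Suc r) j" using fp_min p_def by simp
  have p1: "1 \<le> p" "p \<le> r - 1" using pk unfolding peak_def by auto
  consider "p = r - 1" | "3 \<le> p" "p \<le> r - 2" | "p = 2" "p \<le> r - 2" | "p = 1"
    using p1 by linarith
  then show False
  proof cases
    case 1
    have "j0 < p" using j0 1 unfolding peak_def by auto
    then show False using mn peak_R[OF j0] by blast
  next
    case 2
    have "fp (shl e) r = p - 1"
    proof (rule fp_eq)
      show "peak (shl e) r (p - 1)" unfolding peak_L using 2 pk by simp
      fix j assume "j < p - 1"
      then show "\<not> peak (shl e) r j" unfolding peak_L using mn by simp
    qed
    moreover have "fp e r = p"
    proof (rule fp_eq)
      show "peak e r p" using pk 2 unfolding peak_def by auto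
      fix j assume "j < p"
      then show "\<not> peak e r j" using mn peak_R by blast
    qed
    ultimately have A: "(p - 1 + 1) mod 2 = (p + 1) mod 2" using cL unfolding clr_def by simp
    have "p - 1 + 1 = p" using 2 by simp
    with A have B: "p mod 2 = (p + 1) mod 2" by simp
    show False using B by presburger
  next
    case 3
    have "fp (shl e) r = 1"
    proof (rule fp_eq)
      show "peak (shl e) r 1" unfolding peak_L using 3 pk by (simp add: numeral_2_eq_2)
      fix j assume "j < (1::nat)"
      then show "\<not> peak (shl e) r j" unfolding peak_def by simp
    qed
    moreover have "fp e r = p"
    proof (rule fp_eq)
      show "peak e r p" using pk 3 r unfolding peak_def by auto
      fix j assume "j < p"
      then show "\<not> peak e r j" using mn peak_R by blast
    qed
    ultimately show False using cL 3 unfolding clr_def by simp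
  next
    case 4
    obtain j where j: "peak (shl e) r j" using hL unfolding ext_def hasp_def by blast
    have pe1: "peak e r 1" using pk 4 r unfolding peak_def by auto
    have notX: "\<And>q. q \<noteq> 1 \<Longrightarrow> \<not> peak e r q" using hR pe1 unfolding ext_def isX_def by blast
    have allpk: "\<And>q. peak e (Suc r) q \<Longrightarrow> q = 1 \<or> q = r - 1"
    proof -
      fix q assume q: "peak e (Suc r) q"
      show "q = 1 \<or> q = r - 1"
      proof (cases "q = 1")
        case False
        then have "\<not> peak e r q" using notX by simp
        then show ?thesis using q unfolding peak_def by auto
      qed simp
    qed
    have j1: "1 \<le> j" "peak e (Suc r) (Suc j)" using j unfolding peak_L by auto
    then have jr: "Suc j = r - 1" using allpk by fastforce
    have pr1: "peak e (Suc r) (r - 1)" using j1 jr by simp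
    have "\<not> peak e (Suc r) 2" using peak_adj[of e "Suc r" 1] pk 4 by (simp add: numeral_2_eq_2)
    then have r4: "r \<ge> 4" using pr1 r by (cases "r = 3") auto
    have "fp e r = 1"
    proof (rule fp_eq)
      show "peak e r 1" by (rule pe1)
      fix j assume "j < (1::nat)"
      then show "\<not> peak e r j" unfolding peak_def by simp
    qed
    moreover have "fp (shl e) r = r - 2"
    proof (rule fp_eq)
      show "peak (shl e) r (r - 2)" unfolding peak_L using pr1 r4
        by (simp add: Suc_diff_Suc numeral_2_eq_2)
      fix i assume i: "i < r - 2"
      show "\<not> peak (shl e) r i"
      proof
        assume "peak (shl e) r i"
        then have "1 \<le> i" "peak e (Suc r) (Suc i)" unfolding peak_L by auto
        then show False using allpk[of "Suc i"] i by auto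
      qed
    qed
    ultimately have "(r - 1) mod 2 = (0::nat)" using cL unfolding clr_def using r4
      by (simp add: Suc_diff_Suc numeral_2_eq_2)
    then have "odd r" using r4 by presburger
    then have r5: "r \<ge> 5" using r4 by (cases "r = 4") auto
    define t where "t = r - 5"
    have t: "r = t + 5" using r5 t_def by simp
    have a1: "e 0 < e 1" "e 2 < e 1" using pk 4 unfolding peak_def by (auto simp: numeral_2_eq_2)
    have a2: "e (t + 3) < e (t + 4)" "e (t + 5) < e (t + 4)" using pr1 t unfolding peak_def by (auto simp: add.commute)
    have nop: "\<And>q. 2 \<le> q \<Longrightarrow> q \<le> t + 3 \<Longrightarrow> \<not> peak e (Suc r) q" using allpk t by fastforce
    show False
    proof (cases "e 3 < e 1")
      case True
      have "peak (del2 e) r 1" using a1 True t unfolding peak_def del2_def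
        by (simp add: numeral_2_eq_2 numeral_3_eq_3)
      moreover have "peak (del2 e) r (t + 3)" using a2 t unfolding peak_def del2_def by (simp add: numeral_eq_Suc)
      ultimately have "isX (del2 e) r" by (rule isX_intro) simp
      then show False using h2 unfolding ext_def by simp
    next
      case False
      have asc: "2 \<le> i \<Longrightarrow> i \<le> t + 3 \<Longrightarrow> e i < e (Suc i)" for i
      proof (induction i)
        case 0 then show ?case by simp
      next
        case (Suc i)
        show ?case
        proof (cases "Suc i = 2")
          case True then show ?thesis using a1 False by (simp add: numeral_2_eq_2 numeral_3_eq_3)
        next
          case F: False
          then have IH: "e i < e (Suc i)" using Suc by simp
          have "e (Suc i) \<noteq> e (Suc (Suc i))" using cd[of "Suc i"] Suc t by simp
          moreover have "\<not> peak e (Suc r) (Suc i)" using nop[of "Suc i"] Suc F by simp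
          ultimately show ?thesis using IH Suc t unfolding peak_def by auto
        qed
      qed
      have "e (t + 2) < e (t + 3)" using asc[of "t+2"] by (simp add: numeral_eq_Suc)
      have "peak (delr e r) r 1" using a1 asc[of 2] False t unfolding peak_def delr_def
        by (simp add: numeral_2_eq_2 numeral_3_eq_3)
      moreover have "peak (delr e r) r (t + 3)" using a2 \<open>e (t + 2) < e (t + 3)\<close> t
        unfolding peak_def delr_def by (simp add: numeral_eq_Suc max_def)
      ultimately have "isX (delr e r) r" by (rule isX_intro) simp
      then show False using h3 unfolding ext_def by simp
    qed
  qed
qed

lemma peak_cong: "(\<And>i. i < L \<Longrightarrow> g i = g' i) \<Longrightarrow> peak g L j = peak g' L j"
  unfolding peak_def by (cases "j + 1 < L") auto

lemma peak_cong_fun: "(\<And>i. i < L \<Longrightarrow> g i = g' i) \<Longrightarrow> peak g L = peak g' L"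
  using peak_cong[of L g g'] by (intro HOL.ext) simp

lemma ext_cong: "(\<And>i. i < L \<Longrightarrow> g i = g' i) \<Longrightarrow> ext g L = ext g' L"
  unfolding ext_def hasp_def isX_def using peak_cong_fun[of L g g'] by simp

lemma clr_cong: "(\<And>i. i < L \<Longrightarrow> g i = g' i) \<Longrightarrow> clr g L = clr g' L"
  unfolding clr_def fp_def using peak_cong_fun[of L g g'] by simp

definition colr :: "(nat set \<Rightarrow> nat) \<Rightarrow> nat \<Rightarrow> nat \<Rightarrow> nat set \<Rightarrow> nat" where
  "colr \<chi> k r T = (if ext (dl T) (card T - 1) then k + clr (dl T) (card T - 1)
     else if card (dl T ` {..<card T - 1}) = r \<and> \<chi> (dl T ` {..<card T - 1}) < k
          then \<chi> (dl T ` {..<card T - 1}) else 0)"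

lemma colr_ext: "ext (dl T) (card T - 1) \<Longrightarrow> colr \<chi> k r T = k + clr (dl T) (card T - 1)"
  unfolding colr_def by simp

lemma colr_nonext: "\<not> ext (dl T) (card T - 1) \<Longrightarrow> 0 < k \<Longrightarrow> colr \<chi> k r T < k"
  unfolding colr_def by auto

lemma sub_set:
  assumes fin: "finite X" and g: "\<And>i j. i < j \<Longrightarrow> j \<le> M \<Longrightarrow> g i < g j" and gM: "g M < card X"
  shows "card ((\<lambda>i. en X (g i)) ` {..M}) = Suc M"
    and "(\<lambda>i. en X (g i)) ` {..M} \<subseteq> X"
    and "\<And>i. i < M \<Longrightarrow> dl ((\<lambda>i. en X (g i)) ` {..M}) i = dlt (en X (g i)) (en X (g (Suc i)))"
proof -
  have gle: "i \<le> M \<Longrightarrow> g i \<le> g M" for i using g[of i M] by (cases "i = M") auto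
  have h: "\<And>i j. i < j \<Longrightarrow> j \<le> M \<Longrightarrow> en X (g i) < en X (g j)"
  proof -
    fix i j :: nat assume "i < j" "j \<le> M"
    then show "en X (g i) < en X (g j)"
      using en_mono[OF fin, of "g i" "g j"] g gle[of j] gM by simp
  qed
  show "card ((\<lambda>i. en X (g i)) ` {..M}) = Suc M" by (rule en_image(1)[OF h])
  show "(\<lambda>i. en X (g i)) ` {..M} \<subseteq> X"
  proof
    fix x assume "x \<in> (\<lambda>i. en X (g i)) ` {..M}"
    then obtain i where "i \<le> M" "x = en X (g i)" by auto
    then show "x \<in> X" using en_in[OF fin, of "g i"] gle[of i] gM by simp
  qed
  show "\<And>i. i < M \<Longrightarrow> dl ((\<lambda>i. en X (g i)) ` {..M}) i = dlt (en X (g i)) (en X (g (Suc i)))"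
    by (rule en_image_dl[OF h])
qed

lemma colr_range:
  assumes r: "r \<ge> 3" and k: "k \<ge> 2" and c: "card T = r + 1"
  shows "colr \<chi> k r T < k + eta r"
proof (cases "ext (dl T) r")
  case True
  have cl: "clr (dl T) r < 2" unfolding clr_def by simp
  have "clr (dl T) r < eta r"
  proof (cases "r = 3")
    case True
    have "hasp (dl T) r" using \<open>ext (dl T) r\<close> unfolding ext_def by simp
    then have "peak (dl T) r (fp (dl T) r)" by (rule fp_peak)
    then have "fp (dl T) r = 1" using True unfolding peak_def by auto
    then show ?thesis using True unfolding clr_def eta_def by simp
  next
    case False
    then have "eta r \<ge> 2" unfolding eta_def by auto
    then show ?thesis using cl by simp
  qed
  then show ?thesis using True c colr_ext[of T] by simp
next
  case False
  then have "colr \<chi> k r T < k" using c k colr_nonext[of T k] by simp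
  then show ?thesis by simp
qed

lemma extra_case:
  assumes r: "r \<ge> 3" and fin: "finite X" and cX: "card X = r + 2" and k: "k > 0"
    and mono: "\<And>T. T \<subseteq> X \<Longrightarrow> card T = r + 1 \<Longrightarrow> colr \<chi> k r T = c" and ck: "c \<ge> k"
  shows False
proof -
  define b where "b = en X"
  define e where "e = (\<lambda>l. dlt (b l) (b (Suc l)))"
  have bm: "\<And>i j. i < j \<Longrightarrow> j \<le> r + 1 \<Longrightarrow> b i < b j" using en_mono[OF fin] cX b_def by simp
  define sk where "sk = (\<lambda>j i. if i < j then i else Suc (i::nat))"
  have skm: "\<And>i i'. i < i' \<Longrightarrow> i' \<le> r \<Longrightarrow> sk j i < sk j i'" for j unfolding sk_def by auto
  have skr: "sk j r < card X" if "j \<le> r + 1" for j using that cX unfolding sk_def by auto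
  have gen: "ext (\<lambda>i. dlt (b (sk j i)) (b (sk j (Suc i)))) r
      \<and> k + clr (\<lambda>i. dlt (b (sk j i)) (b (sk j (Suc i)))) r = c" if j: "j \<le> r + 1" for j
  proof -
    note S = sub_set[of X r "sk j", OF fin skm[of _ _ j] skr[OF j]]
    let ?T = "(\<lambda>i. en X (sk j i)) ` {..r}"
    have cT: "card ?T = r + 1" using S(1) by simp
    have sub: "?T \<subseteq> X" using S(2) by simp
    have dlT: "\<And>i. i < r \<Longrightarrow> dl ?T i = dlt (b (sk j i)) (b (sk j (Suc i)))" using S(3) b_def by simp
    have col: "colr \<chi> k r ?T = c" using mono sub cT by simp
    have ex: "ext (dl ?T) r"
    proof (rule ccontr)
      assume "\<not> ext (dl ?T) r"
      then have "colr \<chi> k r ?T < k" using colr_nonext[of ?T k \<chi> r] cT k by simp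
      then show False using col ck by simp
    qed
    have e1: "ext (dl ?T) r = ext (\<lambda>i. dlt (b (sk j i)) (b (sk j (Suc i)))) r" by (rule ext_cong) (rule dlT)
    have e2: "clr (dl ?T) r = clr (\<lambda>i. dlt (b (sk j i)) (b (sk j (Suc i)))) r" by (rule clr_cong) (rule dlT)
    have "k + clr (dl ?T) r = c" using col ex colr_ext[of ?T \<chi> k r] cT by simp
    then show ?thesis using ex e1 e2 by simp
  qed
  have cd: "\<And>i. i < r \<Longrightarrow> e i \<noteq> e (Suc i)"
  proof -
    fix i assume "i < r"
    then show "e i \<noteq> e (Suc i)" unfolding e_def using dlt_neq bm[of i "Suc i"] bm[of "Suc i" "Suc (Suc i)"] by simp
  qed
  have f0: "(\<lambda>i. dlt (b (sk 0 i)) (b (sk 0 (Suc i)))) = shl e" unfolding sk_def shl_def e_def by simp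
  have fR: "\<And>i. i < r \<Longrightarrow> dlt (b (sk (r+1) i)) (b (sk (r+1) (Suc i))) = e i" unfolding sk_def e_def by simp
  have f2: "\<And>i. i < r \<Longrightarrow> dlt (b (sk 2 i)) (b (sk 2 (Suc i))) = del2 e i"
  proof -
    fix i assume i: "i < r"
    show "dlt (b (sk 2 i)) (b (sk 2 (Suc i))) = del2 e i"
    proof (cases "i = 1")
      case True
      have "dlt (b 1) (b 3) = max (dlt (b 1) (b 2)) (dlt (b 2) (b 3))"
        by (rule dlt_max) (use bm[of 1 2] bm[of 2 3] r in simp_all)
      then show ?thesis using True unfolding sk_def del2_def e_def by (simp add: numeral_2_eq_2 numeral_3_eq_3)
    next
      case False
      then show ?thesis unfolding sk_def del2_def e_def by (cases "i = 0") auto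
    qed
  qed
  have f3: "\<And>i. i < r \<Longrightarrow> dlt (b (sk (r - 1) i)) (b (sk (r - 1) (Suc i))) = delr e r i"
  proof -
    fix i assume i: "i < r"
    consider "i < r - 2" | "i = r - 2" | "i = r - 1" using i by linarith
    then show "dlt (b (sk (r - 1) i)) (b (sk (r - 1) (Suc i))) = delr e r i"
    proof cases
      case 1 then have "Suc i < r - 1" by linarith
      then show ?thesis using 1 unfolding sk_def delr_def e_def by simp
    next
      case 2
      have l1: "b (r - 2) < b (r - 1)" by (rule bm) (use r in linarith)+
      have l2: "b (r - 1) < b r" by (rule bm) (use r in linarith)+
      have "dlt (b (r - 2)) (b r) = max (dlt (b (r - 2)) (b (r - 1))) (dlt (b (r - 1)) (b r))"
        by (rule dlt_max) (use l1 l2 in simp_all)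
      moreover have "Suc (r - 2) = r - 1" "Suc (r - 1) = r" using r by simp_all
      ultimately show ?thesis using 2 r unfolding sk_def delr_def e_def by simp
    next
      case 3
      have a: "sk (r - 1) i = r" "sk (r - 1) (Suc i) = Suc r" using 3 r unfolding sk_def by auto
      have c: "delr e r i = e r" using 3 r unfolding delr_def by auto
      show ?thesis using a c unfolding e_def by simp
    qed
  qed
  have gL: "ext (shl e) r" "k + clr (shl e) r = c" using gen[of 0] f0 by simp_all
  have gR: "ext e r" "k + clr e r = c"
    using gen[of "r+1"] ext_cong[OF fR] clr_cong[OF fR] by simp_all
  have g2: "ext (del2 e) r" "k + clr (del2 e) r = c"
    using gen[of 2] ext_cong[OF f2] clr_cong[OF f2] r by simp_all
  have g3: "ext (delr e r) r" "k + clr (delr e r) r = c"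
    using gen[of "r - 1"] ext_cong[OF f3] clr_cong[OF f3] r by simp_all
  show False
    by (rule comb_II[OF r cd gL(1) gR(1) g2(1) g3(1)]) (use gL gR g2 g3 in simp_all)
qed

context
  fixes X :: "nat set" and \<chi> :: "nat set \<Rightarrow> nat" and k r i m n :: nat
  assumes r3: "r \<ge> 3" and k0: "k > 0" and fin: "finite X" and cX: "card X = Suc m"
    and mr: "m \<ge> r + 1" and Xn: "X \<subseteq> {..<2^n}" and n0: "n > 0"
    and mono: "\<And>T. T \<subseteq> X \<Longrightarrow> card T = r + 1 \<Longrightarrow> colr \<chi> k r T = i" and ik: "i < k"
begin

definition "bb = en X"
definition "ee = (\<lambda>l. dlt (bb l) (bb (Suc l)))"

lemma bm: "a < a' \<Longrightarrow> a' \<le> m \<Longrightarrow> bb a < bb a'"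
  using en_mono[OF fin] cX unfolding bb_def by simp

lemma bmono: "a \<le> a' \<Longrightarrow> a' \<le> m \<Longrightarrow> bb a \<le> bb a'"
  using bm by (cases "a = a'") (auto intro: less_imp_le)

lemma cd: "Suc (Suc l) \<le> m \<Longrightarrow> ee l \<noteq> ee (Suc l)"
  unfolding ee_def using dlt_neq bm[of l "Suc l"] bm[of "Suc l" "Suc (Suc l)"] by simp

lemma sub_nonext:
  assumes g: "\<And>a a'. a < a' \<Longrightarrow> a' \<le> r \<Longrightarrow> g a < g a'" and gr: "g r \<le> m"
  shows "\<not> ext (\<lambda>t. dlt (bb (g t)) (bb (g (Suc t)))) r"
proof
  assume ex: "ext (\<lambda>t. dlt (bb (g t)) (bb (g (Suc t)))) r"
  have gr': "g r < card X" using gr cX by simp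
  note S = sub_set[of X r g, OF fin g gr']
  let ?T = "(\<lambda>a. en X (g a)) ` {..r}"
  have dlT: "\<And>t. t < r \<Longrightarrow> dl ?T t = dlt (bb (g t)) (bb (g (Suc t)))" using S(3) bb_def by simp
  have "ext (dl ?T) r" using ex ext_cong[OF dlT] by simp
  then have "colr \<chi> k r ?T \<ge> k" using colr_ext[of ?T \<chi> k r] S(1) by simp
  moreover have "colr \<chi> k r ?T = i" using mono S(1,2) by simp
  ultimately show False using ik by simp
qed

lemma win: assumes "w + r + 1 \<le> m" shows "\<not> hasp (\<lambda>t. ee (w + t)) (Suc r)"
proof
  assume h: "hasp (\<lambda>t. ee (w + t)) (Suc r)"
  have n1: "\<not> ext (\<lambda>t. dlt (bb ((\<lambda>t. w + Suc t) t)) (bb ((\<lambda>t. w + Suc t) (Suc t)))) r"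
    by (rule sub_nonext) (use assms in auto)
  have n2: "\<not> ext (\<lambda>t. dlt (bb ((\<lambda>t. w + t) t)) (bb ((\<lambda>t. w + t) (Suc t)))) r"
    by (rule sub_nonext) (use assms in auto)
  have "shl (\<lambda>t. ee (w + t)) = (\<lambda>t. dlt (bb (w + Suc t)) (bb (w + Suc (Suc t))))"
    unfolding shl_def ee_def by simp
  moreover have "(\<lambda>t. ee (w + t)) = (\<lambda>t. dlt (bb (w + t)) (bb (w + Suc t)))"
    unfolding ee_def by simp
  ultimately show False using comb_I[OF r3 h] n1 n2 by (simp del: add_Suc_right)
qed

lemma nopk: "\<not> peak ee m j"
proof
  assume pk: "peak ee m j"
  define w where "w = min (j - 1) (m - r - 1)"
  have j1: "1 \<le> j" "j + 1 < m" using pk unfolding peak_def by auto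
  have w1: "w + r + 1 \<le> m" using mr w_def by simp
  have w2: "w \<le> j - 1" "j - w < r" using w_def j1 r3 mr by auto
  have "peak (\<lambda>t. ee (w + t)) (Suc r) (j - w)"
  proof -
    have a: "w + (j - w - 1) = j - 1" "w + (j - w) = j" "w + Suc (j - w) = Suc j" using w2 j1 by auto
    show ?thesis unfolding peak_def a using pk w2 j1 unfolding peak_def by auto
  qed
  then show False using win[OF w1] unfolding hasp_def by blast
qed

lemma inj_ee: "inj_on ee {..<m}"
proof (rule inj_onI, rule ccontr)
  fix p q assume p: "p \<in> {..<m}" and q: "q \<in> {..<m}" and eq: "ee p = ee q" and ne: "p \<noteq> q"
  show False
  proof -
    { fix p q assume pq: "p < q" "q < m" and eq: "ee p = ee q"
      have fin: "finite (ee ` {p..q})" "ee ` {p..q} \<noteq> {}" using pq by auto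
      obtain l where l: "l \<in> {p..q}" "ee l = Max (ee ` {p..q})" using Max_in[OF fin] by auto
      have lmax: "\<And>x. x \<in> {p..q} \<Longrightarrow> ee x \<le> ee l" using l fin by simp
      have False
      proof (cases "p < l \<and> l < q")
        case True
        have "p \<le> l - 1" "l - 1 \<le> q" using True by auto
        then have "ee (l - 1) \<le> ee l" using lmax[of "l - 1"] by simp
        moreover have "ee (Suc l) \<le> ee l" using lmax[of "Suc l"] True by simp
        moreover have "ee (l - 1) \<noteq> ee l" using cd[of "l - 1"] True pq by (simp add: Suc_diff_1)
        moreover have "ee l \<noteq> ee (Suc l)" using cd[of l] True pq by simp
        ultimately have "peak ee m l" unfolding peak_def using True pq by auto
        then show False using nopk by blast
      next
        case False
        then have "l = p \<or> l = q" using l by auto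
        then have pm: "\<And>x. x \<in> {p..q} \<Longrightarrow> ee x \<le> ee p" using lmax eq by auto
        have "dlt (bb p) (bb q) = dlt (bb p) (bb (Suc p))"
          by (rule dlt_interval_eq[of m bb p q p]) (use bmono pq pm[unfolded ee_def] in auto)
        then have "dlt (bb p) (bb q) = dlt (bb q) (bb (Suc q))" using eq unfolding ee_def by simp
        moreover have "dlt (bb p) (bb q) \<noteq> dlt (bb q) (bb (Suc q))"
          by (rule dlt_neq) (use bm pq in auto)
        ultimately show False by simp
      qed }
    note * = this
    show False using p q eq ne *[of p q] *[of q p] by (cases "p < q") auto
  qed
qed

definition "cc = (SOME c. c < m \<and> (\<forall>x<m. ee c \<le> ee x))"

lemma cc: "cc < m" "\<And>x. x < m \<Longrightarrow> ee cc \<le> ee x"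
proof -
  have "\<exists>c. c < m \<and> (\<forall>x<m. ee c \<le> ee x)"
  proof -
    have m0: "0 < m" using mr by simp
    then have "ee 0 \<in> ee ` {..<m}" by simp
    then have fin: "finite (ee ` {..<m})" "ee ` {..<m} \<noteq> {}" by auto
    obtain c where c: "c < m" "ee c = Min (ee ` {..<m})" using Min_in[OF fin] by auto
    then show ?thesis using fin by (intro exI[of _ c]) auto
  qed
  then have "cc < m \<and> (\<forall>x<m. ee cc \<le> ee x)" unfolding cc_def by (rule someI_ex)
  then show "cc < m" "\<And>x. x < m \<Longrightarrow> ee cc \<le> ee x" by auto
qed

lemma asc_prop: "ee t < ee (Suc t) \<Longrightarrow> t \<le> u \<Longrightarrow> Suc u < m \<Longrightarrow> ee u < ee (Suc u)"
proof (induction u)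
  case 0 then show ?case by simp
next
  case (Suc u)
  show ?case
  proof (cases "t = Suc u")
    case True then show ?thesis using Suc by simp
  next
    case False
    then have IH: "ee u < ee (Suc u)" using Suc by simp
    have "ee (Suc u) \<noteq> ee (Suc (Suc u))" using cd[of "Suc u"] Suc by simp
    moreover have "\<not> peak ee m (Suc u)" by (rule nopk)
    ultimately show ?thesis using IH Suc.prems unfolding peak_def by auto
  qed
qed

lemma desc_prop: "ee (Suc t) < ee t \<Longrightarrow> Suc t < m \<Longrightarrow> d \<le> t \<Longrightarrow> ee (Suc (t - d)) < ee (t - d)"
proof (induction d)
  case 0 then show ?case by simp
next
  case (Suc d)
  define u where "u = t - Suc d"
  have tu: "t - d = Suc u" using Suc.prems u_def by simp
  have IH: "ee (Suc (Suc u)) < ee (Suc u)" using Suc tu by simp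
  have um: "Suc (Suc u) < m" using Suc.prems tu by simp
  have "ee u \<noteq> ee (Suc u)" using cd[of u] um by simp
  moreover have "\<not> peak ee m (Suc u)" by (rule nopk)
  ultimately have "ee (Suc u) < ee u" using IH um unfolding peak_def by auto
  then show ?case using u_def by simp
qed

lemma chain_up: "(\<And>u. x \<le> u \<Longrightarrow> u < y \<Longrightarrow> ee u < ee (Suc u)) \<Longrightarrow> x < y \<Longrightarrow> ee x < ee y"
proof (induction y)
  case 0 then show ?case by simp
next
  case (Suc y)
  show ?case
  proof (cases "x = y")
    case True then show ?thesis using Suc by simp
  next
    case False
    then have "ee x < ee y" using Suc by simp
    moreover have "ee y < ee (Suc y)" using Suc False by simp
    ultimately show ?thesis by simp
  qed
qed

lemma chain_down: "(\<And>u. x \<le> u \<Longrightarrow> u < y \<Longrightarrow> ee (Suc u) < ee u) \<Longrightarrow> x < y \<Longrightarrow> ee y < ee x"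
proof (induction y)
  case 0 then show ?case by simp
next
  case (Suc y)
  show ?case
  proof (cases "x = y")
    case True then show ?thesis using Suc by simp
  next
    case False
    then have "ee y < ee x" using Suc by simp
    moreover have "ee (Suc y) < ee y" using Suc False by simp
    ultimately show ?thesis by simp
  qed
qed

lemma dec: "t < cc \<Longrightarrow> ee (Suc t) < ee t"
proof (rule ccontr)
  assume t: "t < cc" and "\<not> ee (Suc t) < ee t"
  moreover have "ee t \<noteq> ee (Suc t)" using cd[of t] t cc(1) by simp
  ultimately have up: "ee t < ee (Suc t)" by simp
  have "ee t < ee cc"
    by (rule chain_up) (use asc_prop[OF up] t cc(1) in auto)
  then show False using cc(2)[of t] t cc(1) by simp
qed

lemma inc: "cc \<le> t \<Longrightarrow> Suc t < m \<Longrightarrow> ee t < ee (Suc t)"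
proof (rule ccontr)
  assume t: "cc \<le> t" "Suc t < m" and "\<not> ee t < ee (Suc t)"
  moreover have "ee t \<noteq> ee (Suc t)" using cd[of t] t by simp
  ultimately have dn: "ee (Suc t) < ee t" by simp
  have "ee (Suc t) < ee cc"
  proof (rule chain_down)
    fix u assume u: "cc \<le> u" "u < Suc t"
    then show "ee (Suc u) < ee u" using desc_prop[OF dn t(2), of "t - u"] by simp
  qed (use t in simp)
  then show False using cc(2)[of "Suc t"] t by simp
qed

lemma decle: "x \<le> y \<Longrightarrow> y \<le> cc \<Longrightarrow> ee y \<le> ee x"
proof (cases "x = y")
  case False
  assume xy: "x \<le> y" "y \<le> cc"
  have "ee y < ee x"
  proof (rule chain_down)
    fix u assume "x \<le> u" "u < y"
    then show "ee (Suc u) < ee u" using dec xy by simp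
  qed (use xy False in simp)
  then show ?thesis by simp
qed simp

lemma incle: "cc \<le> x \<Longrightarrow> x \<le> y \<Longrightarrow> y < m \<Longrightarrow> ee x \<le> ee y"
proof (cases "x = y")
  case False
  assume xy: "cc \<le> x" "x \<le> y" "y < m"
  have "ee x < ee y"
  proof (rule chain_up)
    fix u assume "x \<le> u" "u < y"
    then show "ee u < ee (Suc u)" using inc xy by simp
  qed (use xy False in simp)
  then show ?thesis by simp
qed simp

lemma realize:
  assumes hS: "S \<subseteq> ee ` {..<m}" and cS: "card S = r"
  shows "\<exists>T. T \<subseteq> X \<and> card T = r + 1 \<and> dl T ` {..<r} = S"
proof -
  define Q where "Q = {q. q < m \<and> ee q \<in> S}"
  have QS: "ee ` Q = S" using hS unfolding Q_def by auto
  have Qm: "Q \<subseteq> {..<m}" unfolding Q_def by auto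
  have injQ: "inj_on ee Q" using inj_on_subset[OF inj_ee Qm] .
  have finQ: "finite Q" using Qm finite_subset by blast
  have cQ: "card Q = r" using card_image[OF injQ] QS cS by simp
  define A where "A = {q \<in> Q. q \<le> cc}"
  define B where "B = {q \<in> Q. cc < q}"
  define P where "P = insert (Suc cc) (A \<union> Suc ` B)"
  have finA: "finite A" "finite B" using finQ unfolding A_def B_def by auto
  have finP: "finite P" unfolding P_def using finA by simp
  have dAB: "A \<inter> Suc ` B = {}" unfolding A_def B_def by auto
  have nin: "Suc cc \<notin> A \<union> Suc ` B" unfolding A_def B_def by auto
  have cB: "card (Suc ` B) = card B" by (rule card_image) simp
  have QAB: "Q = A \<union> B" "A \<inter> B = {}" unfolding A_def B_def by auto
  have "card A + card B = r" using card_Un_disjoint[OF finA QAB(2)] QAB(1) cQ by simp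
  then have cP: "card P = Suc r"
    unfolding P_def using nin finA card_Un_disjoint[OF finA(1) _ dAB] cB by simp
  have Pm: "P \<subseteq> {..m}" unfolding P_def A_def B_def Q_def using cc(1) by auto
  define pe where "pe = en P"
  have pm: "\<And>a a'. a < a' \<Longrightarrow> a' \<le> r \<Longrightarrow> pe a < pe a'"
    unfolding pe_def using en_mono[OF finP] cP by simp
  have ple: "\<And>a a'. a \<le> a' \<Longrightarrow> a' \<le> r \<Longrightarrow> pe a \<le> pe a'"
    using pm by (metis le_neq_implies_less less_imp_le order_refl)
  have pin: "\<And>a. a \<le> r \<Longrightarrow> pe a \<in> P" unfolding pe_def using en_in[OF finP] cP by simp
  have psurj: "\<And>z. z \<in> P \<Longrightarrow> \<exists>a\<le>r. pe a = z"
  proof -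
    fix z assume "z \<in> P"
    then obtain a where "a < card P" "en P a = z" using en_surj[OF finP] by blast
    then have "a \<le> r" "pe a = z" unfolding pe_def using cP by auto
    then show "\<exists>a\<le>r. pe a = z" by blast
  qed
  have pbound: "\<And>a. a \<le> r \<Longrightarrow> pe a \<le> m" using pin Pm by auto
  have prX: "pe r < card X" using pbound[of r] cX by simp
  note Sb = sub_set[of X r pe, OF fin pm prX]
  define T where "T = (\<lambda>a. en X (pe a)) ` {..r}"
  have cT: "card T = r + 1" using Sb(1) T_def by simp
  have sT: "T \<subseteq> X" using Sb(2) T_def by simp
  have dlT: "\<And>t. t < r \<Longrightarrow> dl T t = dlt (bb (pe t)) (bb (pe (Suc t)))"
    using Sb(3) T_def bb_def by simp
  have consec: "\<And>t z. t < r \<Longrightarrow> z \<in> P \<Longrightarrow> pe t < z \<Longrightarrow> z < pe (Suc t) \<Longrightarrow> False"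
  proof -
    fix t z assume t: "t < r" and z: "z \<in> P" "pe t < z" "z < pe (Suc t)"
    obtain a where a: "a \<le> r" "pe a = z" using psurj[OF z(1)] by blast
    show False
    proof (cases "a \<le> t")
      case True then show False using ple[of a t] t a z by simp
    next
      case False then show False using ple[of "Suc t" a] t a z by simp
    qed
  qed
  have K1: "pe (Suc t) \<le> Suc cc \<and> pe t \<in> Q \<and> dlt (bb (pe t)) (bb (pe (Suc t))) = ee (pe t)"
    if t: "t < r" and x: "pe t \<le> cc" for t
  proof -
    have xy: "pe t < pe (Suc t)" using pm t by simp
    have xP: "pe t \<in> P" using pin t by simp
    have xQ: "pe t \<in> Q" using xP x unfolding P_def A_def B_def by auto
    have yc: "pe (Suc t) \<le> Suc cc"
    proof (rule ccontr)
      assume "\<not> pe (Suc t) \<le> Suc cc"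
      then show False using consec[of t "Suc cc"] t x unfolding P_def by simp
    qed
    have ym: "pe (Suc t) \<le> m" using pbound t by simp
    have "dlt (bb (pe t)) (bb (pe (Suc t))) = dlt (bb (pe t)) (bb (Suc (pe t)))"
    proof (rule dlt_interval_eq[of m bb])
      fix l assume l: "l \<in> {pe t..<pe (Suc t)}"
      then have "ee l \<le> ee (pe t)" using decle[of "pe t" l] yc by simp
      then show "dlt (bb l) (bb (Suc l)) \<le> dlt (bb (pe t)) (bb (Suc (pe t)))" unfolding ee_def by simp
    qed (use bmono xy ym in auto)
    then show ?thesis using yc xQ unfolding ee_def by simp
  qed
  have K2: "\<exists>q\<in>Q. cc < q \<and> pe (Suc t) = Suc q \<and> dlt (bb (pe t)) (bb (pe (Suc t))) = ee q"
    if t: "t < r" and x: "cc < pe t" for t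
  proof -
    have xy: "pe t < pe (Suc t)" using pm t by simp
    have yP: "pe (Suc t) \<in> P" using pin t by simp
    have "pe (Suc t) \<noteq> Suc cc" using xy x by simp
    moreover have "pe (Suc t) \<notin> A" using xy x unfolding A_def by auto
    ultimately obtain q where q: "q \<in> B" "pe (Suc t) = Suc q" using yP unfolding P_def by auto
    have qQ: "q \<in> Q" "cc < q" "q < m" using q(1) unfolding B_def Q_def by auto
    have ym: "pe (Suc t) \<le> m" using pbound t by simp
    have "dlt (bb (pe t)) (bb (pe (Suc t))) = dlt (bb q) (bb (Suc q))"
    proof (rule dlt_interval_eq[of m bb])
      fix l assume l: "l \<in> {pe t..<pe (Suc t)}"
      then have "ee l \<le> ee q" using incle[of l q] x q(2) qQ by simp
      then show "dlt (bb l) (bb (Suc l)) \<le> dlt (bb q) (bb (Suc q))" unfolding ee_def by simp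
    qed (use bmono xy ym q(2) in auto)
    then show ?thesis using qQ q(2) unfolding ee_def by blast
  qed
  have "dl T ` {..<r} = S"
  proof
    show "dl T ` {..<r} \<subseteq> S"
    proof
      fix s assume "s \<in> dl T ` {..<r}"
      then obtain t where t: "t < r" "s = dl T t" by auto
      show "s \<in> S"
      proof (cases "pe t \<le> cc")
        case True then show ?thesis using K1[OF t(1) True] t dlT QS by auto
      next
        case False
        then obtain q where "q \<in> Q" "dlt (bb (pe t)) (bb (pe (Suc t))) = ee q" using K2[OF t(1)] by auto
        then show ?thesis using t dlT QS by auto
      qed
    qed
    show "S \<subseteq> dl T ` {..<r}"
    proof
      fix s assume "s \<in> S"
      then obtain q where q: "q \<in> Q" "s = ee q" using QS by auto
      obtain a' where a': "a' \<le> r" "pe a' = Suc cc" using psurj[of "Suc cc"] unfolding P_def by auto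
      show "s \<in> dl T ` {..<r}"
      proof (cases "q \<le> cc")
        case True
        then have "q \<in> P" using q unfolding P_def A_def by auto
        then obtain a where a: "a \<le> r" "pe a = q" using psurj by blast
        have "a < a'"
        proof (rule ccontr)
          assume "\<not> a < a'"
          then have "pe a' \<le> pe a" using ple[of a' a] a by simp
          then show False using a a' True by simp
        qed
        then have ar: "a < r" using a' by simp
        have "dl T a = ee q" using K1[OF ar] a True dlT[OF ar] by simp
        then show ?thesis using ar q by force
      next
        case False
        then have "Suc q \<in> P" using q unfolding P_def B_def by auto
        then obtain a where a: "a \<le> r" "pe a = Suc q" using psurj by blast
        have "a' < a"
        proof (rule ccontr)
          assume "\<not> a' < a"
          then have "pe a \<le> pe a'" using ple[of a a'] a' by simp
          then show False using a a' False by simp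
        qed
        define t where "t = a - 1"
        have ta: "Suc t = a" "t < r" using \<open>a' < a\<close> a unfolding t_def by auto
        have "\<not> pe t \<le> cc"
        proof
          assume "pe t \<le> cc"
          then have "pe (Suc t) \<le> Suc cc" using K1[OF ta(2)] by simp
          then show False using ta a False by simp
        qed
        then obtain q' where q': "q' \<in> Q" "pe (Suc t) = Suc q'" "dlt (bb (pe t)) (bb (pe (Suc t))) = ee q'"
          using K2[OF ta(2)] by auto
        have "q' = q" using q'(2) ta a by simp
        then have "dl T t = ee q" using q' dlT[OF ta(2)] by simp
        then show ?thesis using ta q by force
      qed
    qed
  qed
  then show ?thesis using cT sT by blast
qed

lemma mono_final:
  assumes hchi: "\<And>S. S \<subseteq> {..<n} \<Longrightarrow> card S = r \<Longrightarrow> \<chi> S < k"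
  shows "\<exists>D. D \<subseteq> {..<n} \<and> card D = m \<and> monochromatic \<chi> r D i"
proof -
  define D where "D = ee ` {..<m}"
  have cD: "card D = m" unfolding D_def using card_image[OF inj_ee] by simp
  have Dn: "D \<subseteq> {..<n}"
  proof
    fix x assume "x \<in> D"
    then obtain l where l: "l < m" "x = ee l" unfolding D_def by auto
    have "bb l \<in> X" "bb (Suc l) \<in> X" unfolding bb_def using en_in[OF fin] l cX by auto
    then have "bb l < 2^n" "bb (Suc l) < 2^n" using Xn by auto
    then show "x \<in> {..<n}" using l dlt_bound n0 unfolding ee_def by simp
  qed
  have "monochromatic \<chi> r D i"
    unfolding monochromatic_def
  proof (intro allI impI)
    fix S assume S: "S \<subseteq> D \<and> card S = r"
    then obtain T where T: "T \<subseteq> X" "card T = r + 1" "dl T ` {..<r} = S"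
      using realize[of S] unfolding D_def by blast
    have col: "colr \<chi> k r T = i" using mono T by simp
    have ne: "\<not> ext (dl T) r"
    proof
      assume "ext (dl T) r"
      then have "colr \<chi> k r T \<ge> k" using colr_ext[of T \<chi> k r] T by simp
      then show False using col ik by simp
    qed
    have "\<chi> S < k" using hchi S Dn by auto
    then have "colr \<chi> k r T = \<chi> S" using ne T S unfolding colr_def by simp
    then show "\<chi> S = i" using col by simp
  qed
  then show ?thesis using cD Dn by blast
qed

end

theorem theorem1p1:
  fixes k n r :: nat and s :: "nat \<Rightarrow> nat"
  assumes "k \<ge> 2" and "r \<ge> 3" and "n > r"
    and "\<And>i. i < k \<Longrightarrow> r + 1 \<le> s i \<and> s i \<le> n"
    and "\<not> arrows n s k r"
  shows "\<not> arrows (2 ^ n) (\<lambda>i. if i < k then s i + 1 else r + 2) (k + eta r) (r + 1)"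
proof -
  from assms(5) obtain \<chi> where hchi: "\<forall>T. T \<subseteq> {..<n} \<and> card T = r \<longrightarrow> \<chi> T < k"
    and hno: "\<not> (\<exists>i<k. \<exists>X. X \<subseteq> {..<n} \<and> card X = s i \<and> monochromatic \<chi> r X i)"
    unfolding arrows_def by blast
  have hchi': "\<And>S. S \<subseteq> {..<n} \<Longrightarrow> card S = r \<Longrightarrow> \<chi> S < k" using hchi by blast
  have k0: "k > 0" using assms(1) by simp
  have n0: "n > 0" using assms(3) by simp
  have rng: "\<forall>T. T \<subseteq> {..<2^n} \<and> card T = r + 1 \<longrightarrow> colr \<chi> k r T < k + eta r"
    using colr_range[OF assms(2) assms(1)] by blast
  show ?thesis unfolding arrows_def
  proof
    assume A: "\<forall>f. (\<forall>T. T \<subseteq> {..<2 ^ n} \<and> card T = r + 1 \<longrightarrow> f T < k + eta r) \<longrightarrow>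
         (\<exists>i<k + eta r. \<exists>X. X \<subseteq> {..<2 ^ n} \<and> card X = (if i < k then s i + 1 else r + 2)
            \<and> monochromatic f (r + 1) X i)"
    obtain i X where i: "i < k + eta r" and X: "X \<subseteq> {..<2^n}"
      "card X = (if i < k then s i + 1 else r + 2)" "monochromatic (colr \<chi> k r) (r + 1) X i"
      using A rng by blast
    have fin: "finite X" using X(1) finite_subset by blast
    have mono: "\<And>T. T \<subseteq> X \<Longrightarrow> card T = r + 1 \<Longrightarrow> colr \<chi> k r T = i"
      using X(3) unfolding monochromatic_def by blast
    show False
    proof (cases "i < k")
      case True
      have cX: "card X = Suc (s i)" using X(2) True by simp
      have mr: "s i \<ge> r + 1" using assms(4) True by simp
      obtain D where "D \<subseteq> {..<n}" "card D = s i" "monochromatic \<chi> r D i"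
        using mono_final[OF assms(2) k0 fin cX mr X(1) n0 mono True hchi'] by blast
      then show False using hno True by blast
    next
      case False
      then have cX: "card X = r + 2" using X(2) by simp
      show False using extra_case[OF assms(2) fin cX k0 mono] False by simp
    qed
  qed
qed


end
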